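(* Fix $0<d<1$ and let $c(x)=x^d$. For any game with $n$ jobs and cost function $c$, any Nash equilibrium $s$ and any optimal assignment $s^*$, we have $\frac{C(s)}{C(s^* )}=O\!\left(n^{\frac{1-d}{2}}\right)$.
   Context: A game is specified by a cost function $c$ (here $c(x)=x^d$, $c(0)=0$), a time horizon $T$ with slots $t=1,\dots,T$, and a set of $n$ jobs, each job $j$ having integer release time $r_j$ and integer deadline $d_j$ with $0<r_j<d_j<T$. An assignment $s$ gives each job $j$ a slot $s_j$ with $r_j\le s_j<d_j$. The load of slot $t$ is $l_t(s)=|\{j:s_j=t\}|$ and $C(s)=\sum_{t=1}^T c(l_t(s))$. An assignment $s$ is a Nash equilibrium if for every job $j$ and every slot $t\neq s_j$ with $r_j\le t<d_j$: $\frac{c(l_{s_j}(s))}{l_{s_j}(s)}\le\frac{c(l_t(s)+1)}{l_t(s)+1}$. An optimal assignment is one minimizing $C$ over all assignments. *)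

theory Defs
  imports Complex_Main
begin

text \<open>Jobs are indexed by 0..<n; job j has release time r j and deadline dl j.
  Slots are 1..T. Cost function c(x) = x^e with exponent e (0 powr e = 0).\<close>

definition cost :: "real \<Rightarrow> nat \<Rightarrow> real" where
  "cost e x = real x powr e"

definition valid_game :: "nat \<Rightarrow> nat \<Rightarrow> (nat \<Rightarrow> nat) \<Rightarrow> (nat \<Rightarrow> nat) \<Rightarrow> bool" where
  "valid_game T n r dl \<longleftrightarrow> (\<forall>j<n. 0 < r j \<and> r j < dl j \<and> dl j < T)"

definition assignment :: "nat \<Rightarrow> (nat \<Rightarrow> nat) \<Rightarrow> (nat \<Rightarrow> nat) \<Rightarrow> (nat \<Rightarrow> nat) \<Rightarrow> bool" where
  "assignment n r dl s \<longleftrightarrow> (\<forall>j<n. r j \<le> s j \<and> s j < dl j)"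

definition load :: "nat \<Rightarrow> (nat \<Rightarrow> nat) \<Rightarrow> nat \<Rightarrow> nat" where
  "load n s t = card {j. j < n \<and> s j = t}"

definition total_cost :: "real \<Rightarrow> nat \<Rightarrow> nat \<Rightarrow> (nat \<Rightarrow> nat) \<Rightarrow> real" where
  "total_cost e T n s = (\<Sum>t = 1..T. cost e (load n s t))"

definition nash_eq :: "real \<Rightarrow> nat \<Rightarrow> (nat \<Rightarrow> nat) \<Rightarrow> (nat \<Rightarrow> nat) \<Rightarrow> (nat \<Rightarrow> nat) \<Rightarrow> bool" where
  "nash_eq e n r dl s \<longleftrightarrow> assignment n r dl s \<and>
     (\<forall>j<n. \<forall>t. t \<noteq> s j \<and> r j \<le> t \<and> t < dl j \<longrightarrow>
        cost e (load n s (s j)) / real (load n s (s j))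
          \<le> cost e (load n s t + 1) / real (load n s t + 1))"

definition optimal :: "real \<Rightarrow> nat \<Rightarrow> nat \<Rightarrow> (nat \<Rightarrow> nat) \<Rightarrow> (nat \<Rightarrow> nat) \<Rightarrow> (nat \<Rightarrow> nat) \<Rightarrow> bool" where
  "optimal e T n r dl s \<longleftrightarrow> assignment n r dl s \<and>
     (\<forall>s'. assignment n r dl s' \<longrightarrow> total_cost e T n s \<le> total_cost e T n s')"

end

theory Submission
  imports Defs
begin

lemma load_pos: "j < n \<Longrightarrow> 0 < load n s (s j)"
  unfolding load_def by (subst card_gt_0_iff) auto

lemma powr_ratio: "0 < (x::real) \<Longrightarrow> x powr e / x = x powr (e - 1)"
  by (simp add: powr_diff)

lemma ne_step:
  assumes "nash_eq e n r dl s" "e < 1" "j < n" "t \<noteq> s j" "r j \<le> t" "t < dl j"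
  shows "load n s t < load n s (s j)"
proof (rule ccontr)
  let ?a = "real (load n s (s j))"
  let ?b = "real (load n s t + 1)"
  assume "\<not> ?thesis"
  then have ab: "?a < ?b" by simp
  have a0: "0 < ?a" using load_pos assms(3) by simp
  have b0: "0 < ?b" by simp
  have "?b powr (e-1) < ?a powr (e-1)"
    by (rule powr_less_mono2_neg) (use assms(2) a0 ab in auto)
  moreover
  have "cost e (load n s (s j)) / real (load n s (s j)) \<le> cost e (load n s t + 1) / real (load n s t + 1)"
    using assms unfolding nash_eq_def by blast
  then have "?a powr e / ?a \<le> ?b powr e / ?b" unfolding cost_def .
  then have "?a powr (e-1) \<le> ?b powr (e-1)" by (simp only: powr_ratio[OF a0] powr_ratio[OF b0])
  ultimately show False by simp
qed

lemma group_bound: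
  assumes e: "0 < e" "e < 1"
    and ne: "nash_eq e n r dl s"
    and as': "assignment n r dl s'"
  shows "(\<Sum>j\<in>{j. j < n \<and> s' j = u}. real (load n s (s j)) powr (e-1))
         \<le> 4 * real n powr ((1-e)/2) * real (load n s' u) powr e"
proof -
  define L where "L = load n s"
  define G where "G = {j. j < n \<and> s' j = u}"
  define w where "w j = real (L (s j)) powr (e-1)" for j
  define m where "m = card G"
  have finG: "finite G" unfolding G_def by auto
  have mdef: "load n s' u = m" unfolding m_def G_def load_def by simp
  have as: "assignment n r dl s" using ne unfolding nash_eq_def by blast
  show ?thesis
  proof (cases "G = {}")
    case True
    then show ?thesis using e unfolding G_def[symmetric] by (simp add: mdef m_def)
  next
    case False
    then have m1: "1 \<le> m" unfolding m_def using finG by (simp add: Suc_leI card_gt_0_iff)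
    have mn: "m \<le> n" unfolding m_def G_def
      using card_mono[of "{..<n}" "{j. j < n \<and> s' j = u}"] by auto
    define lam where "lam = sqrt (real m)"
    have lam1: "1 \<le> lam" unfolding lam_def using m1 by simp
    have lamsq: "lam * lam = real m" unfolding lam_def by simp
    define Ghi where "Ghi = {j\<in>G. lam \<le> real (L (s j))}"
    define Glo where "Glo = {j\<in>G. real (L (s j)) < lam}"
    have GU: "G = Ghi \<union> Glo" "Ghi \<inter> Glo = {}" unfolding Ghi_def Glo_def by auto
    have finhi: "finite Ghi" "finite Glo" using finG GU by auto
    have sumsplit: "sum w G = sum w Ghi + sum w Glo"
      using GU finhi by (simp add: sum.union_disjoint)
    have hi: "sum w Ghi \<le> real m * lam powr (e-1)"
    proof -
      have "sum w Ghi \<le> real (card Ghi) * lam powr (e-1)"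
      proof (rule sum_bounded_above)
        fix j assume "j \<in> Ghi"
        then show "w j \<le> lam powr (e-1)" unfolding w_def Ghi_def
          using powr_mono2'[of "e-1" lam "real (L (s j))"] e lam1 by auto
      qed
      also have "\<dots> \<le> real m * lam powr (e-1)"
        using card_mono[OF finG, of Ghi] GU unfolding m_def
        by (intro mult_right_mono) auto
      finally show ?thesis .
    qed
    have Lpos: "0 < L (s j)" if "j \<in> G" for j
      using that load_pos unfolding G_def L_def by auto
    have lo1: "sum w Glo \<le> real (card (s ` Glo)) * lam powr e"
    proof -
      have "sum w Glo = (\<Sum>t\<in>s ` Glo. sum w {j. j \<in> Glo \<and> s j = t})"
        by (rule sum.image_gen[OF finhi(2)])
      also have "\<dots> \<le> (\<Sum>t\<in>s ` Glo. lam powr e)"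
      proof (rule sum_mono)
        fix t assume t: "t \<in> s ` Glo"
        then obtain j0 where j0: "j0 \<in> Glo" "s j0 = t" by auto
        have Lt: "0 < real (L t)" "real (L t) < lam"
          using j0 Lpos unfolding Glo_def by auto
        have "sum w {j. j \<in> Glo \<and> s j = t} = (\<Sum>j\<in>{j. j \<in> Glo \<and> s j = t}. real (L t) powr (e-1))"
          unfolding w_def by (rule sum.cong) auto
        also have "\<dots> = real (card {j. j \<in> Glo \<and> s j = t}) * real (L t) powr (e-1)" by simp
        also have "\<dots> \<le> real (L t) * real (L t) powr (e-1)"
        proof (intro mult_right_mono)
          have "{j. j \<in> Glo \<and> s j = t} \<subseteq> {j. j < n \<and> s j = t}"
            unfolding Glo_def G_def by auto
          then have "card {j. j \<in> Glo \<and> s j = t} \<le> L t"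
            unfolding L_def load_def by (intro card_mono) auto
          then show "real (card {j. j \<in> Glo \<and> s j = t}) \<le> real (L t)" by simp
        qed simp
        also have "\<dots> = real (L t) powr e"
          using powr_mult_base[of "real (L t)" "e-1"] by simp
        also have "\<dots> \<le> lam powr e"
          using Lt e by (intro powr_mono2) auto
        finally show "sum w {j. j \<in> Glo \<and> s j = t} \<le> lam powr e" .
      qed
      also have "\<dots> = real (card (s ` Glo)) * lam powr e" by simp
      finally show ?thesis .
    qed
    define R where "R = {t \<in> s ` Glo. u < t}"
    define Lf where "Lf = {t \<in> s ` Glo. t < u}"
    have sub: "s ` Glo \<subseteq> {u} \<union> R \<union> Lf" unfolding R_def Lf_def by auto
    have finR: "finite R" "finite Lf" unfolding R_def Lf_def using finhi by auto
    have job: "j < n" "s' j = u" "r j \<le> u" "u < dl j" "r j \<le> s j" "s j < dl j" if "j \<in> Glo" for j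
      using that as as' unfolding Glo_def G_def assignment_def by auto
    have Lrange: "L ` X \<subseteq> {1..nat \<lfloor>lam\<rfloor>}" if XS: "X \<subseteq> s ` Glo" for X
    proof
      fix k assume "k \<in> L ` X"
      then obtain x where x: "x \<in> X" "k = L x" by auto
      then obtain j where j: "j \<in> Glo" "k = L (s j)" using XS by blast
      then have "0 < k" "real k \<le> lam" using Lpos unfolding Glo_def by auto
      then show "k \<in> {1..nat \<lfloor>lam\<rfloor>}" using le_nat_floor[of k lam] by auto
    qed
    have cardfl: "real (card {1..nat \<lfloor>lam\<rfloor>}) \<le> lam"
      using of_nat_floor[of lam] lam1 by simp
    have monoR: "L t < L t'" if H: "t \<in> R" "t' \<in> R" "t < t'" for t t'
    proof -
      obtain j where j: "j \<in> Glo" "s j = t'" using H unfolding R_def by auto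
      show ?thesis using ne_step[OF ne e(2) job(1)[OF j(1)], of t] job[OF j(1)] j H
        unfolding R_def L_def by auto
    qed
    have monoL: "L t' < L t" if H: "t \<in> Lf" "t' \<in> Lf" "t < t'" for t t'
    proof -
      obtain j where j: "j \<in> Glo" "s j = t" using H unfolding Lf_def by auto
      show ?thesis using ne_step[OF ne e(2) job(1)[OF j(1)], of t'] job[OF j(1)] j H
        unfolding Lf_def L_def by auto
    qed
    have injR: "inj_on L R"
    proof (rule inj_onI)
      fix x y assume "x \<in> R" "y \<in> R" "L x = L y"
      then show "x = y" using monoR by (metis less_irrefl linorder_neqE_nat)
    qed
    have injL: "inj_on L Lf"
    proof (rule inj_onI)
      fix x y assume "x \<in> Lf" "y \<in> Lf" "L x = L y"
      then show "x = y" using monoL by (metis less_irrefl linorder_neqE_nat)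
    qed
    have cR: "real (card R) \<le> lam"
    proof -
      have "card R = card (L ` R)" using card_image[OF injR] by simp
      also have "\<dots> \<le> card {1..nat \<lfloor>lam\<rfloor>}"
        by (rule card_mono) (use Lrange[of R] R_def in auto)
      finally show ?thesis using cardfl by linarith
    qed
    have cL: "real (card Lf) \<le> lam"
    proof -
      have "card Lf = card (L ` Lf)" using card_image[OF injL] by simp
      also have "\<dots> \<le> card {1..nat \<lfloor>lam\<rfloor>}"
        by (rule card_mono) (use Lrange[of Lf] Lf_def in auto)
      finally show ?thesis using cardfl by linarith
    qed
    have "card (s ` Glo) \<le> card ({u} \<union> R \<union> Lf)"
      by (rule card_mono) (use finR sub in auto)
    also have "\<dots> \<le> card {u} + card R + card Lf"
      by (metis card_Un_le add_le_mono1 le_trans)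
    finally have "real (card (s ` Glo)) \<le> 1 + real (card R) + real (card Lf)" by simp
    then have cimg: "real (card (s ` Glo)) \<le> 3 * lam" using cR cL lam1 by linarith
    define p where "p = lam powr e"
    have p0: "0 \<le> p" unfolding p_def by simp
    have lo: "sum w Glo \<le> 3 * lam * p"
      using lo1 cimg p0 unfolding p_def by (meson mult_right_mono order_trans)
    have "real m * lam powr (e-1) = lam * p"
      using lamsq[symmetric] lam1 unfolding p_def by (simp add: powr_diff)
    then have tot: "sum w G \<le> 4 * lam * p" using sumsplit hi lo by simp
    have mpe: "real m powr e = p * p"
      unfolding p_def lamsq[symmetric] using lam1 by (simp add: powr_mult)
    have lamx: "lam = real m powr ((1-e)/2) * p"
    proof -
      have "lam = real m powr (1/2)" unfolding lam_def by (simp add: powr_half_sqrt)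
      also have "\<dots> = real m powr ((1-e)/2) * real m powr (e/2)"
        by (simp add: powr_add[symmetric] add_divide_distrib[symmetric])
      also have "real m powr (e/2) = p"
        unfolding p_def lam_def using m1 by (simp add: powr_half_sqrt[symmetric] powr_powr)
      finally show ?thesis .
    qed
    have "real m powr ((1-e)/2) \<le> real n powr ((1-e)/2)"
      using mn m1 e by (intro powr_mono2) auto
    then have "lam \<le> real n powr ((1-e)/2) * p" using lamx p0 by (simp add: mult_right_mono)
    then have "4 * lam * p \<le> 4 * (real n powr ((1-e)/2) * p) * p"
      using p0 by (simp add: mult_right_mono)
    also have "\<dots> = 4 * real n powr ((1-e)/2) * real m powr e" using mpe by simp
    finally show ?thesis using tot unfolding w_def G_def L_def mdef by simp
  qed
qed


lemma cost_as_sum: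
  assumes "\<And>j. j < n \<Longrightarrow> s j \<in> {1..T}"
  shows "total_cost e T n s = (\<Sum>j<n. real (load n s (s j)) powr (e-1))"
proof -
  have "(\<Sum>j<n. real (load n s (s j)) powr (e-1))
      = (\<Sum>t\<in>{1..T}. \<Sum>j\<in>{x. x \<in> {..<n} \<and> s x = t}. real (load n s (s j)) powr (e-1))"
    by (rule sum.group[symmetric]) (use assms in auto)
  also have "\<dots> = (\<Sum>t\<in>{1..T}. cost e (load n s t))"
  proof (rule sum.cong[OF refl])
    fix t
    have eqs: "{x. x \<in> {..<n} \<and> s x = t} = {j. j < n \<and> s j = t}" by auto
    have "(\<Sum>j\<in>{x. x \<in> {..<n} \<and> s x = t}. real (load n s (s j)) powr (e-1))
        = (\<Sum>j\<in>{j. j < n \<and> s j = t}. real (load n s t) powr (e-1))"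
      unfolding eqs by (rule sum.cong) auto
    also have "\<dots> = real (load n s t) * real (load n s t) powr (e-1)"
      by (simp add: load_def)
    also have "\<dots> = cost e (load n s t)"
      unfolding cost_def using powr_mult_base[of "real (load n s t)" "e-1"] by simp
    finally show "(\<Sum>j\<in>{x. x \<in> {..<n} \<and> s x = t}. real (load n s (s j)) powr (e-1))
        = cost e (load n s t)" .
  qed
  finally show ?thesis unfolding total_cost_def by simp
qed

theorem lemma1:
  fixes e :: real
  assumes "0 < e" and "e < 1"
  shows "\<exists>K N. \<forall>n \<ge> N. \<forall>T r dl s s'.
           valid_game T n r dl \<and> nash_eq e n r dl s \<and> optimal e T n r dl s' \<longrightarrow>
           total_cost e T n s \<le> K * real n powr ((1 - e) / 2) * total_cost e T n s'"
proof (intro exI allI impI)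
  fix n T r dl s s'
  assume H: "valid_game T n r dl \<and> nash_eq e n r dl s \<and> optimal e T n r dl s'"
  then have ne: "nash_eq e n r dl s" and as: "assignment n r dl s" and as': "assignment n r dl s'"
    and vg: "valid_game T n r dl"
    unfolding optimal_def nash_eq_def by auto
  have sin: "s j \<in> {1..T}" "s' j \<in> {1..T}" if "j < n" for j
    using that as as' vg unfolding assignment_def valid_game_def
    by (auto dest!: spec[of _ j])
  have "total_cost e T n s = (\<Sum>j<n. real (load n s (s j)) powr (e-1))"
    by (rule cost_as_sum) (use sin in auto)
  also have "\<dots> = (\<Sum>u\<in>{1..T}. \<Sum>j\<in>{x. x \<in> {..<n} \<and> s' x = u}. real (load n s (s j)) powr (e-1))"
    by (rule sum.group[symmetric]) (use sin in auto)
  also have "\<dots> \<le> (\<Sum>u\<in>{1..T}. 4 * real n powr ((1-e)/2) * real (load n s' u) powr e)"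
  proof (rule sum_mono)
    fix u
    have eqs: "{x. x \<in> {..<n} \<and> s' x = u} = {j. j < n \<and> s' j = u}" by auto
    show "(\<Sum>j\<in>{x. x \<in> {..<n} \<and> s' x = u}. real (load n s (s j)) powr (e-1))
          \<le> 4 * real n powr ((1-e)/2) * real (load n s' u) powr e"
      unfolding eqs by (rule group_bound[OF assms ne as'])
  qed
  also have "\<dots> = 4 * real n powr ((1 - e) / 2) * total_cost e T n s'"
    unfolding total_cost_def cost_def by (simp add: sum_distrib_left)
  finally show "total_cost e T n s \<le> 4 * real n powr ((1 - e) / 2) * total_cost e T n s'" .
qed

end
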